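(* Consider a hierarchical tensor factorization with mode tree $\mathcal T$ whose weight matrices $(W^{(\nu)}(t))_{\nu\in\mathcal T}$ evolve under gradient flow on $\phi_H$ for $t\ge0$. Then for all $\nu\in\mathrm{int}(\mathcal T)$, $r\in[R_\nu]$ and $w,w'\in\mathrm{LC}(\nu,r)$: $$\|w(t)\|^2-\|w'(t)\|^2=\|w(0)\|^2-\|w'(0)\|^2\quad\text{for all } t\ge0.$$
   Context: Fix $N\in\mathbb N$, $D_1,\dots,D_N\in\mathbb N$; $[K]:=\{1,\dots,K\}$. Norms are Frobenius norms, $\otimes$ the tensor product. A mode tree $\mathcal T$ over $[N]$ is a rooted tree whose nodes are labeled by subsets of $[N]$, with exactly $N$ leaves labeled $\{1\},\dots,\{N\}$, and where each interior node's label is the union of its children's labels; nodes are identified with labels, the root is $[N]$, $\mathrm{int}(\mathcal T)$ denotes interior nodes, $Pa(\nu)$ the parent, $C(\nu)$ the children (in a fixed order). A hierarchical tensor factorization is given by $R_\nu\in\mathbb N$ ($\nu\in\mathrm{int}(\mathcal T)$), with $R_{Pa([N])}:=1$, $R_{\{n\}}:=D_n$, and weight matrices $W^{(\nu)}\in\mathbb R^{R_\nu\times R_{Pa(\nu)}}$, $\nu\in\mathcal T$. Intermediate tensors: $\mathcal W^{(\{n\},r)}:=W^{(\{n\})}_{:,r}$; for $\nu\in\mathrm{int}(\mathcal T)\setminus\{[N]\}$ (leaves to root) and $r\in[R_{Pa(\nu)}]$, $\mathcal W^{(\nu,r)}:=\pi_\nu\big(\sum_{r'=1}^{R_\nu}W^{(\nu)}_{r',r}\bigotimes_{\nu_c\in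 C(\nu)}\mathcal W^{(\nu_c,r')}\big)$; end tensor $\mathcal W_H:=\pi_{[N]}\big(\sum_{r'=1}^{R_{[N]}}W^{([N])}_{r',1}\bigotimes_{\nu_c\in C([N])}\mathcal W^{(\nu_c,r')}\big)\in\mathbb R^{D_1\times\cdots\times D_N}$, where $\pi_\nu$ permutes modes (ordered by children, each child's elements ascending) into ascending order of the elements of $\nu$. $\mathrm{LC}(\nu,r)$ ($\nu\in\mathrm{int}(\mathcal T)$, $r\in[R_\nu]$) is the collection of vectors $W^{(\nu)}_{r,:}$ and $W^{(\nu_c)}_{:,r}$, $\nu_c\in C(\nu)$. Let $\mathcal L_H:\mathbb R^{D_1\times\cdots\times D_N}\to\mathbb R_{\ge0}$ be differentiable and locally smooth, $\phi_H((W^{(\nu)})_\nu):=\mathcal L_H(\mathcal W_H)$; gradient flow: $\frac{d}{dt}W^{(\nu)}(t)=-\frac{\partial}{\partial W^{(\nu)}}\phi_H((W^{(\nu')}(t))_{\nu'})$ for all $\nu\in\mathcal T$, $t\ge0$. *)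

theory Defs
  imports "HOL-Analysis.Analysis"
begin

datatype mtree = Leaf nat | Node "mtree list"

fun lbl :: "mtree \<Rightarrow> nat set" where
  "lbl (Leaf n) = {n}"
| "lbl (Node cs) = \<Union> (set (map lbl cs))"

fun leaves :: "mtree \<Rightarrow> nat list" where
  "leaves (Leaf n) = [n]"
| "leaves (Node cs) = concat (map leaves cs)"

text \<open>Every interior node has at least two children (a node with a single child would carry
  the same label as its child, contradicting the identification of nodes with labels).\<close>
fun wf_mt :: "mtree \<Rightarrow> bool" where
  "wf_mt (Leaf n) = True"
| "wf_mt (Node cs) = (length cs \<ge> 2 \<and> (\<forall>c\<in>set cs. wf_mt c))"

fun subtrees :: "mtree \<Rightarrow> mtree set" where
  "subtrees (Leaf n) = {Leaf n}"
| "subtrees (Node cs) = insert (Node cs) (\<Union>c\<in>set cs. subtrees c)"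

definition mode_tree :: "nat \<Rightarrow> mtree \<Rightarrow> bool" where
  "mode_tree N T \<longleftrightarrow> (\<exists>cs. T = Node cs) \<and> wf_mt T \<and> distinct (leaves T)
     \<and> set (leaves T) = {1..N}"

definition nodes :: "mtree \<Rightarrow> nat set set" where
  "nodes T = lbl ` subtrees T"

definition interior :: "mtree \<Rightarrow> nat set set" where
  "interior T = {lbl (Node cs) | cs. Node cs \<in> subtrees T}"

definition children :: "mtree \<Rightarrow> nat set \<Rightarrow> nat set set" where
  "children T \<nu> = {lbl c | cs c. Node cs \<in> subtrees T \<and> lbl (Node cs) = \<nu> \<and> c \<in> set cs}"

definition parent :: "mtree \<Rightarrow> nat set \<Rightarrow> nat set" where
  "parent T \<nu> = (THE \<mu>. \<exists>cs c. Node cs \<in> subtrees T \<and> lbl (Node cs) = \<mu> \<and> c \<in> set cs \<and> lbl c = \<nu>)"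

definition rk :: "(nat set \<Rightarrow> nat) \<Rightarrow> (nat \<Rightarrow> nat) \<Rightarrow> nat set \<Rightarrow> nat" where
  "rk R D \<nu> = (if card \<nu> = 1 then D (the_elem \<nu>) else R \<nu>)"

definition prk :: "mtree \<Rightarrow> (nat set \<Rightarrow> nat) \<Rightarrow> (nat \<Rightarrow> nat) \<Rightarrow> nat set \<Rightarrow> nat" where
  "prk T R D \<nu> = (if \<nu> = lbl T then 1 else rk R D (parent T \<nu>))"

text \<open>A tensor with modes in a set is represented by its entries as a function of an index
  assignment (mode \<mapsto> index, indices 0-based). The tensor product of tensors over disjoint
  mode sets, followed by the mode permutation \<pi>_\<nu> into ascending order, is then simply the
  pointwise product of entries.\<close>

type_synonym params = "nat set \<Rightarrow> nat \<Rightarrow> nat \<Rightarrow> real"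
type_synonym tensor = "(nat \<Rightarrow> nat) \<Rightarrow> real"

fun ten :: "(nat set \<Rightarrow> nat) \<Rightarrow> params \<Rightarrow> mtree \<Rightarrow> nat \<Rightarrow> tensor" where
  "ten R W (Leaf n) r idx = W {n} (idx n) r"
| "ten R W (Node cs) r idx =
     (\<Sum>r'<R (lbl (Node cs)). W (lbl (Node cs)) r' r * prod_list (map (\<lambda>c. ten R W c r' idx) cs))"

text \<open>Valid multi-indices of R^{D_1 x ... x D_N} (0-based; unused modes set to 0).\<close>
definition idxset :: "nat \<Rightarrow> (nat \<Rightarrow> nat) \<Rightarrow> (nat \<Rightarrow> nat) set" where
  "idxset N D = {idx. (\<forall>n\<in>{1..N}. idx n < D n) \<and> (\<forall>n. n \<notin> {1..N} \<longrightarrow> idx n = 0)}"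

definition tspace :: "nat \<Rightarrow> (nat \<Rightarrow> nat) \<Rightarrow> tensor set" where
  "tspace N D = {X. \<forall>idx. idx \<notin> idxset N D \<longrightarrow> X idx = 0}"

definition tnorm :: "nat \<Rightarrow> (nat \<Rightarrow> nat) \<Rightarrow> tensor \<Rightarrow> real" where
  "tnorm N D X = sqrt (\<Sum>idx\<in>idxset N D. (X idx)\<^sup>2)"

text \<open>End tensor W_H, with r = 0 the unique column index of W^([N]) (R_{Pa([N])} = 1).\<close>
definition end_tensor :: "nat \<Rightarrow> (nat \<Rightarrow> nat) \<Rightarrow> mtree \<Rightarrow> (nat set \<Rightarrow> nat) \<Rightarrow> params \<Rightarrow> tensor" where
  "end_tensor N D T R W = (\<lambda>idx. if idx \<in> idxset N D then ten R W T 0 idx else 0)"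

definition is_gradient :: "nat \<Rightarrow> (nat \<Rightarrow> nat) \<Rightarrow> (tensor \<Rightarrow> real) \<Rightarrow> (tensor \<Rightarrow> tensor) \<Rightarrow> bool" where
  "is_gradient N D L G \<longleftrightarrow> (\<forall>X\<in>tspace N D. G X \<in> tspace N D \<and>
     (\<forall>\<epsilon>>0. \<exists>\<delta>>0. \<forall>H\<in>tspace N D. tnorm N D H < \<delta> \<longrightarrow>
        \<bar>L (\<lambda>idx. X idx + H idx) - L X - (\<Sum>idx\<in>idxset N D. G X idx * H idx)\<bar> \<le> \<epsilon> * tnorm N D H))"

definition differentiable_loss :: "nat \<Rightarrow> (nat \<Rightarrow> nat) \<Rightarrow> (tensor \<Rightarrow> real) \<Rightarrow> bool" where
  "differentiable_loss N D L \<longleftrightarrow> (\<exists>G. is_gradient N D L G)"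

definition locally_smooth_loss :: "nat \<Rightarrow> (nat \<Rightarrow> nat) \<Rightarrow> (tensor \<Rightarrow> real) \<Rightarrow> bool" where
  "locally_smooth_loss N D L \<longleftrightarrow> (\<exists>G. is_gradient N D L G \<and>
     (\<forall>X\<in>tspace N D. \<exists>\<delta>>0. \<exists>K. \<forall>Y\<in>tspace N D. \<forall>Z\<in>tspace N D.
        tnorm N D (\<lambda>idx. Y idx - X idx) < \<delta> \<longrightarrow> tnorm N D (\<lambda>idx. Z idx - X idx) < \<delta> \<longrightarrow>
        tnorm N D (\<lambda>idx. G Y idx - G Z idx) \<le> K * tnorm N D (\<lambda>idx. Y idx - Z idx)))"

definition phiH :: "nat \<Rightarrow> (nat \<Rightarrow> nat) \<Rightarrow> mtree \<Rightarrow> (nat set \<Rightarrow> nat) \<Rightarrow> (tensor \<Rightarrow> real) \<Rightarrow> params \<Rightarrow> real" where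
  "phiH N D T R L W = L (end_tensor N D T R W)"

definition upd :: "params \<Rightarrow> nat set \<Rightarrow> nat \<Rightarrow> nat \<Rightarrow> real \<Rightarrow> params" where
  "upd W \<nu> i j x = W(\<nu> := (W \<nu>)(i := (W \<nu> i)(j := x)))"

definition gradient_flow :: "nat \<Rightarrow> (nat \<Rightarrow> nat) \<Rightarrow> mtree \<Rightarrow> (nat set \<Rightarrow> nat) \<Rightarrow> (tensor \<Rightarrow> real)
    \<Rightarrow> (real \<Rightarrow> params) \<Rightarrow> bool" where
  "gradient_flow N D T R L W \<longleftrightarrow> (\<forall>t\<ge>0. \<forall>\<nu>\<in>nodes T. \<forall>i<rk R D \<nu>. \<forall>j<prk T R D \<nu>.
     \<exists>g. ((\<lambda>x. phiH N D T R L (upd (W t) \<nu> i j x)) has_real_derivative g) (at (W t \<nu> i j))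
       \<and> ((\<lambda>s. W s \<nu> i j) has_real_derivative (- g)) (at t within {0..}))"

text \<open>Vectors are lists of reals; LC(\<nu>,r) is the collection of the vectors W^(\<nu>)_{r,:} and
  W^(\<nu>_c)_{:,r} for children \<nu>_c, given as functions of the weights.\<close>
definition LC :: "mtree \<Rightarrow> (nat set \<Rightarrow> nat) \<Rightarrow> (nat \<Rightarrow> nat) \<Rightarrow> nat set \<Rightarrow> nat \<Rightarrow> (params \<Rightarrow> real list) set" where
  "LC T R D \<nu> r = insert (\<lambda>W. map (\<lambda>j. W \<nu> r j) [0..<prk T R D \<nu>])
     {(\<lambda>W. map (\<lambda>i. W c i r) [0..<rk R D c]) | c. c \<in> children T \<nu>}"

definition vnorm :: "real list \<Rightarrow> real" where
  "vnorm v = sqrt (sum_list (map (\<lambda>x. x\<^sup>2) v))"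

end

theory Submission
  imports Defs
begin

lemma lbl_leaves: "lbl S = set (leaves S)"
  by (induction S rule: lbl.induct) auto

lemma sub_refl: "S \<in> subtrees S"
  by (cases S) auto

lemma sub_trans: "S1 \<in> subtrees S2 \<Longrightarrow> S2 \<in> subtrees S3 \<Longrightarrow> S1 \<in> subtrees S3"
  by (induction S3 arbitrary: S2 rule: subtrees.induct) auto

lemma child_sub: "c \<in> set cs \<Longrightarrow> c \<in> subtrees (Node cs)"
  using sub_refl by auto

lemma sub_lbl: "S1 \<in> subtrees S \<Longrightarrow> lbl S1 \<subseteq> lbl S"
  by (induction S rule: subtrees.induct) auto

lemma sub_wf: "S1 \<in> subtrees S \<Longrightarrow> wf_mt S \<Longrightarrow> wf_mt S1"
  by (induction S rule: subtrees.induct) auto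

lemma sub_dist: "S1 \<in> subtrees S \<Longrightarrow> distinct (leaves S) \<Longrightarrow> distinct (leaves S1)"
  by (induction S rule: subtrees.induct) (auto simp: distinct_concat_iff)

lemma wf_ne: "wf_mt S \<Longrightarrow> lbl S \<noteq> {}"
proof (induction S)
  case (Leaf x) then show ?case by simp
next
  case (Node cs)
  then obtain c where "c \<in> set cs" by (cases cs) auto
  with Node show ?case by auto
qed

lemma size_sub: "S1 \<in> subtrees S \<Longrightarrow> size S1 \<le> size S"
proof (induction S rule: subtrees.induct)
  case (2 cs)
  then show ?case
    using size_list_estimation'[of _ cs _ size] by fastforce
qed simp

lemma size_child: "c \<in> set cs \<Longrightarrow> size c < size (Node cs)"
  using size_list_estimation'[OF _ order_refl, of c cs size] by simp

definition good where "good S \<longleftrightarrow> wf_mt S \<and> distinct (leaves S)"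

lemma good_sub: "good S \<Longrightarrow> S1 \<in> subtrees S \<Longrightarrow> good S1"
  unfolding good_def using sub_wf sub_dist by blast

lemma good_children:
  assumes "good (Node cs)"
  shows "distinct cs" "\<And>c1 c2. c1 \<in> set cs \<Longrightarrow> c2 \<in> set cs \<Longrightarrow> c1 \<noteq> c2 \<Longrightarrow> lbl c1 \<inter> lbl c2 = {}"
proof -
  have wf: "\<And>c. c \<in> set cs \<Longrightarrow> leaves c \<noteq> []"
    using assms wf_ne lbl_leaves unfolding good_def by fastforce
  have d: "distinct (concat (map leaves cs))" using assms unfolding good_def by simp
  have "removeAll [] (map leaves cs) = map leaves cs"
    using wf by (intro removeAll_id) force
  then have "distinct (map leaves cs)" using d by (simp add: distinct_concat_iff)
  then show "distinct cs" by (simp add: distinct_map)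
  fix c1 c2 assume c: "c1 \<in> set cs" "c2 \<in> set cs" "c1 \<noteq> c2"
  show "lbl c1 \<inter> lbl c2 = {}"
  proof (cases "leaves c1 = leaves c2")
    case True
    then have "set (leaves c1) \<inter> set (leaves c2) \<noteq> {}" using wf c by auto
    moreover have "leaves c1 \<in> set (map leaves cs)" "leaves c2 \<in> set (map leaves cs)" using c by auto
    ultimately show ?thesis using \<open>distinct (map leaves cs)\<close> c
      by (metis distinct_map inj_onD True)
  next
    case False
    then show ?thesis using d c by (auto simp: distinct_concat_iff lbl_leaves)
  qed
qed

lemma good_strict:
  assumes "good (Node cs)" "c \<in> set cs"
  shows "lbl c \<subset> lbl (Node cs)"
proof -
  have "length cs \<ge> 2" using assms unfolding good_def by simp
  then obtain c' where c': "c' \<in> set cs" "c' \<noteq> c"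
  proof -
    have l: "0 < length cs" "1 < length cs" using \<open>length cs \<ge> 2\<close> by auto
    have "cs ! 0 \<in> set cs" "cs ! 1 \<in> set cs" using l by (auto intro!: nth_mem)
    moreover have "cs ! 0 \<noteq> cs ! 1"
      using l good_children(1)[OF assms(1)] distinct_conv_nth[of cs] by (metis zero_neq_one)
    ultimately show ?thesis using that by metis
  qed
  have "lbl c' \<noteq> {}" using c' assms good_def wf_ne by auto
  then show ?thesis using good_children(2)[OF assms(1) assms(2) c'(1)] c' assms(2) by auto
qed

lemma good_card:
  assumes "good (Node cs)"
  shows "card (lbl (Node cs)) \<noteq> 1"
proof
  assume "card (lbl (Node cs)) = 1"
  then obtain a where a: "lbl (Node cs) = {a}" by (meson card_1_singletonE)
  obtain c where c: "c \<in> set cs" using assms unfolding good_def by (cases cs) auto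
  have "lbl c \<subset> {a}" using good_strict[OF assms c] a by simp
  moreover have "lbl c \<noteq> {}" using c assms good_def wf_ne by auto
  ultimately show False by auto
qed

lemma sub_strict: "good S \<Longrightarrow> S1 \<in> subtrees S \<Longrightarrow> S1 \<noteq> S \<Longrightarrow> lbl S1 \<subset> lbl S"
proof (induction S rule: subtrees.induct)
  case (2 cs)
  then obtain c where c: "c \<in> set cs" "S1 \<in> subtrees c" by auto
  have "lbl S1 \<subseteq> lbl c" using sub_lbl c by blast
  then show ?case using good_strict[OF 2(2) c(1)] by blast
qed simp

lemma good_ne: "good S \<Longrightarrow> lbl S \<noteq> {}"
  using wf_ne good_def by blast

lemma sub_inj: "good S \<Longrightarrow> S1 \<in> subtrees S \<Longrightarrow> S2 \<in> subtrees S \<Longrightarrow> lbl S1 = lbl S2 \<Longrightarrow> S1 = S2"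
proof (induction S arbitrary: S1 S2 rule: subtrees.induct)
  case (2 cs)
  have sc: "\<And>X c. c \<in> set cs \<Longrightarrow> X \<in> subtrees c \<Longrightarrow> lbl X \<subset> lbl (Node cs)"
    using good_strict[OF 2(2)] sub_lbl by blast
  show ?case
  proof (cases "S1 = Node cs \<or> S2 = Node cs")
    case True
    then show ?thesis using 2 sc by (metis insert_iff subtrees.simps(2) UN_iff less_irrefl)
  next
    case False
    then obtain c1 c2 where c: "c1 \<in> set cs" "S1 \<in> subtrees c1" "c2 \<in> set cs" "S2 \<in> subtrees c2"
      using 2 by auto
    show ?thesis
    proof (cases "c1 = c2")
      case True
      then show ?thesis using 2 c good_sub child_sub by blast
    next
      case False
      have "lbl c1 \<inter> lbl c2 = {}" using good_children(2)[OF 2(2) c(1) c(3) False] .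
      moreover have "lbl S1 \<subseteq> lbl c1" "lbl S2 \<subseteq> lbl c2" using c sub_lbl by auto
      moreover have "lbl S1 \<noteq> {}" using good_ne good_sub[OF 2(2)] c child_sub sub_trans by blast
      ultimately show ?thesis using 2(5) by blast
    qed
  qed
qed simp


lemma parent_exists: "S0 \<in> subtrees S \<Longrightarrow> S0 \<noteq> S \<Longrightarrow> \<exists>cs'. Node cs' \<in> subtrees S \<and> S0 \<in> set cs'"
proof (induction S arbitrary: S0 rule: subtrees.induct)
  case (2 cs)
  then obtain c where c: "c \<in> set cs" "S0 \<in> subtrees c" by auto
  show ?case
  proof (cases "S0 = c")
    case True then show ?thesis using c by auto
  next
    case False
    then obtain cs' where "Node cs' \<in> subtrees c" "S0 \<in> set cs'" using 2(1)[OF c] by blast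
    then show ?thesis using c by auto
  qed
qed simp

lemma unique_parent:
  "good S \<Longrightarrow> Node a \<in> subtrees S \<Longrightarrow> Node b \<in> subtrees S \<Longrightarrow> c \<in> set a \<Longrightarrow> c \<in> set b \<Longrightarrow> a = b"
proof (induction S arbitrary: a b rule: subtrees.induct)
  case (2 cs)
  have contra: "False" if "c \<in> set cs" "Node x \<in> subtrees c2" "c2 \<in> set cs" "c \<in> set x" for x c2
  proof (cases "c = c2")
    case True
    then have "size (Node x) \<le> size c" using that size_sub by blast
    moreover have "size c < size (Node x)" using that size_child by blast
    ultimately show False by simp
  next
    case False
    have "c \<in> subtrees c2" using sub_trans[OF child_sub[OF that(4)] that(2)] .
    then have "lbl c \<subseteq> lbl c2" by (rule sub_lbl)
    moreover have "lbl c \<noteq> {}" using good_ne good_sub[OF 2(2) child_sub[OF that(1)]] by blast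
    ultimately show False using good_children(2)[OF 2(2) that(1) that(3) False] by blast
  qed
  show ?case
  proof (cases "Node a = Node cs")
    case A: True
    show ?thesis
    proof (cases "Node b = Node cs")
      case True then show ?thesis using A by simp
    next
      case False
      then obtain c2 where c2: "c2 \<in> set cs" "Node b \<in> subtrees c2" using 2(4) by auto
      have "c \<in> set cs" using A 2(5) by simp
      then show ?thesis using contra[OF _ c2(2) c2(1) 2(6)] by blast
    qed
  next
    case A: False
    then obtain c1 where c1: "c1 \<in> set cs" "Node a \<in> subtrees c1" using 2(3) by auto
    show ?thesis
    proof (cases "Node b = Node cs")
      case True
      have "c \<in> set cs" using True 2(6) by simp
      then show ?thesis using contra[OF _ c1(2) c1(1) 2(5)] by blast
    next
      case False
      then obtain c2 where c2: "c2 \<in> set cs" "Node b \<in> subtrees c2" using 2(4) by auto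
      show ?thesis
      proof (cases "c1 = c2")
        case True
        have "good c1" using good_sub[OF 2(2) child_sub[OF c1(1)]] .
        then show ?thesis using 2(1)[OF c1(1) _ c1(2) _ 2(5) 2(6)] c2(2) True by blast
      next
        case False
        have "c \<in> subtrees c1" using sub_trans[OF child_sub[OF 2(5)] c1(2)] .
        have "c \<in> subtrees c2" using sub_trans[OF child_sub[OF 2(6)] c2(2)] .
        have "lbl c \<subseteq> lbl c1" "lbl c \<subseteq> lbl c2"
          using sub_lbl[OF \<open>c \<in> subtrees c1\<close>] sub_lbl[OF \<open>c \<in> subtrees c2\<close>] by auto
        moreover have "lbl c \<noteq> {}" using good_ne good_sub[OF 2(2) sub_trans[OF \<open>c \<in> subtrees c1\<close> child_sub[OF c1(1)]]] by blast
        ultimately have False using good_children(2)[OF 2(2) c1(1) c2(1) False] by blast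
        then show ?thesis ..
      qed
    qed
  qed
qed simp

lemma parent_eq:
  assumes "good T" "Node cs \<in> subtrees T" "c \<in> set cs"
  shows "parent T (lbl c) = lbl (Node cs)"
  unfolding parent_def
proof (rule the_equality)
  show "\<exists>cs' c'. Node cs' \<in> subtrees T \<and> lbl (Node cs') = lbl (Node cs) \<and> c' \<in> set cs' \<and> lbl c' = lbl c"
    using assms by blast
  fix \<mu> assume "\<exists>cs' c'. Node cs' \<in> subtrees T \<and> lbl (Node cs') = \<mu> \<and> c' \<in> set cs' \<and> lbl c' = lbl c"
  then obtain cs' c' where h: "Node cs' \<in> subtrees T" "lbl (Node cs') = \<mu>" "c' \<in> set cs'" "lbl c' = lbl c"
    by blast
  have "c' \<in> subtrees T" "c \<in> subtrees T" using h assms child_sub sub_trans by blast+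
  then have "c' = c" using sub_inj[OF assms(1)] h(4) by blast
  then have "cs' = cs" using unique_parent[OF assms(1) h(1) assms(2)] h(3) assms(3) by blast
  then show "\<mu> = lbl (Node cs)" using h by simp
qed

lemma child_not_root:
  assumes "good T" "Node cs \<in> subtrees T" "c \<in> set cs"
  shows "lbl c \<noteq> lbl T"
proof -
  have "c \<in> subtrees T" using assms child_sub sub_trans by blast
  moreover have "c \<noteq> T"
    using size_sub[OF assms(2)] size_child[OF assms(3)] by auto
  ultimately show ?thesis using sub_strict[OF assms(1)] by blast
qed

lemma prk_child:
  assumes "good T" "Node cs \<in> subtrees T" "c \<in> set cs"
  shows "prk T R D (lbl c) = R (lbl (Node cs))"
  using good_card[OF good_sub[OF assms(1,2)]] parent_eq[OF assms] child_not_root[OF assms]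
  unfolding prk_def rk_def by simp

lemma rk_node: "good (Node cs) \<Longrightarrow> rk R D (lbl (Node cs)) = R (lbl (Node cs))"
  using good_card unfolding rk_def by simp

lemma rk_leaf: "rk R D {n} = D n"
  unfolding rk_def by simp

lemma ten_local:
  "(\<forall>S'\<in>subtrees S. W' (lbl S') = W (lbl S')) \<Longrightarrow> ten R W' S rr idx = ten R W S rr idx"
proof (induction S arbitrary: rr)
  case (Leaf n)
  then show ?case by simp
next
  case (Node cs)
  have "\<And>c r'. c \<in> set cs \<Longrightarrow> ten R W' c r' idx = ten R W c r' idx"
  proof -
    fix c r' assume c: "c \<in> set cs"
    have "\<forall>S'\<in>subtrees c. W' (lbl S') = W (lbl S')" using Node(2) c by auto
    then show "ten R W' c r' idx = ten R W c r' idx" using Node(1)[OF c] by blast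
  qed
  moreover have "W' (lbl (Node cs)) = W (lbl (Node cs))" using Node(2) sub_refl by blast
  ultimately show ?case
    by (simp del: lbl.simps cong: map_cong)
qed


lemma lbl_sub_not:
  assumes "good (Node cs)" "c0 \<in> set cs" "X \<in> subtrees c0"
  shows "lbl X \<noteq> lbl (Node cs)"
  using sub_lbl[OF assms(3)] good_strict[OF assms(1,2)] by blast

lemma lbl_other_not:
  assumes "good (Node cs)" "c0 \<in> set cs" "c \<in> set cs" "c \<noteq> c0" "X \<in> subtrees c0" "Y \<in> subtrees c"
  shows "lbl Y \<noteq> lbl X"
proof
  assume e: "lbl Y = lbl X"
  have "lbl Y \<subseteq> lbl c" "lbl X \<subseteq> lbl c0" using sub_lbl assms(5,6) by auto
  moreover have "lbl Y \<noteq> {}"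
    using good_ne good_sub[OF assms(1) sub_trans[OF assms(6) child_sub[OF assms(3)]]] by blast
  ultimately show False using good_children(2)[OF assms(1) assms(3) assms(2) assms(4)] e by blast
qed

lemma node_split:
  assumes g: "good (Node cs)" and c0: "c0 \<in> set cs"
   and agree: "\<forall>S'\<in>subtrees (Node cs). lbl S' \<notin> lbl ` subtrees c0 \<longrightarrow> W' (lbl S') = W (lbl S')"
  shows "ten R W' (Node cs) rr idx = (\<Sum>r'<R (lbl (Node cs)). W (lbl (Node cs)) r' rr * ten R W' c0 r' idx
            * (\<Prod>c\<in>set cs - {c0}. ten R W c r' idx))"
proof -
  have nu: "W' (lbl (Node cs)) = W (lbl (Node cs))"
    using agree sub_refl lbl_sub_not[OF g c0] by (metis imageE)
  have oth: "ten R W' c r' idx = ten R W c r' idx" if c: "c \<in> set cs - {c0}" for c r'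
  proof (rule ten_local, intro ballI)
    fix S' assume S': "S' \<in> subtrees c"
    have "S' \<in> subtrees (Node cs)" using sub_trans[OF S' child_sub] c by blast
    moreover have "lbl S' \<notin> lbl ` subtrees c0"
      using lbl_other_not[OF g c0 _ _ _ S'] c by blast
    ultimately show "W' (lbl S') = W (lbl S')" using agree by blast
  qed
  have pr: "prod_list (map (\<lambda>c. ten R W' c r' idx) cs) = ten R W' c0 r' idx * (\<Prod>c\<in>set cs - {c0}. ten R W c r' idx)" for r'
  proof -
    have "prod_list (map (\<lambda>c. ten R W' c r' idx) cs) = (\<Prod>c\<in>set cs. ten R W' c r' idx)"
      by (rule prod.distinct_set_conv_list[OF good_children(1)[OF g], symmetric])
    also have "\<dots> = ten R W' c0 r' idx * (\<Prod>c\<in>set cs - {c0}. ten R W' c r' idx)"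
      using prod.remove[OF _ c0] by simp
    also have "\<dots> = ten R W' c0 r' idx * (\<Prod>c\<in>set cs - {c0}. ten R W c r' idx)"
      using oth by simp
    finally show ?thesis .
  qed
  show ?thesis
    by (subst ten.simps(2)) (simp only: nu pr mult.assoc)
qed

lemma path:
  "good S \<Longrightarrow> Node cs' \<in> subtrees S \<Longrightarrow> S0 \<in> set cs' \<Longrightarrow>
   \<exists>coef. \<forall>W'. (\<forall>\<mu>. \<mu> \<notin> lbl ` subtrees S0 \<longrightarrow> W' \<mu> = W \<mu>) \<longrightarrow>
     ten R W' S rr idx = (\<Sum>k<R (lbl (Node cs')). coef k * ten R W' S0 k idx)"
proof (induction S arbitrary: rr)
  case (Leaf n)
  then show ?case by simp
next
  case (Node cs)
  let ?\<nu> = "lbl (Node cs)"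
  have g: "good (Node cs)" by fact
  have ag: "\<forall>S'\<in>subtrees (Node cs). lbl S' \<notin> lbl ` subtrees c0 \<longrightarrow> W' (lbl S') = W (lbl S')"
    if "\<forall>\<mu>. \<mu> \<notin> lbl ` subtrees S0 \<longrightarrow> W' \<mu> = W \<mu>" "S0 \<in> subtrees c0" for W' c0
    using that sub_trans by blast
  show ?case
  proof (cases "Node cs' = Node cs")
    case True
    then have S0: "S0 \<in> set cs" using Node by simp
    define coef where "coef = (\<lambda>r'. W ?\<nu> r' rr * (\<Prod>c\<in>set cs - {S0}. ten R W c r' idx))"
    show ?thesis
    proof (intro exI[of _ coef] allI impI)
      fix W' assume a: "\<forall>\<mu>. \<mu> \<notin> lbl ` subtrees S0 \<longrightarrow> W' \<mu> = W \<mu>"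
      show "ten R W' (Node cs) rr idx = (\<Sum>k<R (lbl (Node cs')). coef k * ten R W' S0 k idx)"
        unfolding node_split[OF g S0 ag[OF a sub_refl]] using True
        by (simp del: lbl.simps add: coef_def ac_simps)
    qed
  next
    case False
    then obtain c0 where c0: "c0 \<in> set cs" "Node cs' \<in> subtrees c0" using Node(3) by auto
    have gc0: "good c0" using good_sub[OF g child_sub[OF c0(1)]] .
    have S0: "S0 \<in> subtrees c0" using sub_trans[OF child_sub[OF Node(4)] c0(2)] .
    have "\<forall>r'. \<exists>coef. \<forall>W'. (\<forall>\<mu>. \<mu> \<notin> lbl ` subtrees S0 \<longrightarrow> W' \<mu> = W \<mu>) \<longrightarrow>
     ten R W' c0 r' idx = (\<Sum>k<R (lbl (Node cs')). coef k * ten R W' S0 k idx)"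
      using Node(1)[OF c0(1) gc0 c0(2) Node(4)] by blast
    then obtain cf where cf: "\<And>r' W'. (\<forall>\<mu>. \<mu> \<notin> lbl ` subtrees S0 \<longrightarrow> W' \<mu> = W \<mu>) \<Longrightarrow>
     ten R W' c0 r' idx = (\<Sum>k<R (lbl (Node cs')). cf r' k * ten R W' S0 k idx)"
      by metis
    define P where "P = (\<lambda>r'. \<Prod>c\<in>set cs - {c0}. ten R W c r' idx)"
    define coef where "coef = (\<lambda>k. \<Sum>r'<R ?\<nu>. W ?\<nu> r' rr * cf r' k * P r')"
    show ?thesis
    proof (intro exI[of _ coef] allI impI)
      fix W' assume a: "\<forall>\<mu>. \<mu> \<notin> lbl ` subtrees S0 \<longrightarrow> W' \<mu> = W \<mu>"
      have "ten R W' (Node cs) rr idx = (\<Sum>r'<R ?\<nu>. W ?\<nu> r' rr * ten R W' c0 r' idx * P r')"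
        unfolding node_split[OF g c0(1) ag[OF a S0]] P_def ..
      also have "\<dots> = (\<Sum>r'<R ?\<nu>. \<Sum>k<R (lbl (Node cs')). W ?\<nu> r' rr * cf r' k * P r' * ten R W' S0 k idx)"
        by (simp only: cf[OF a] sum_distrib_left sum_distrib_right ac_simps)
      also have "\<dots> = (\<Sum>k<R (lbl (Node cs')). coef k * ten R W' S0 k idx)"
        unfolding coef_def sum_distrib_right by (rule sum.swap)
      finally show "ten R W' (Node cs) rr idx = (\<Sum>k<R (lbl (Node cs')). coef k * ten R W' S0 k idx)" .
    qed
  qed
qed


definition rowset :: "params \<Rightarrow> nat set \<Rightarrow> nat \<Rightarrow> (nat \<Rightarrow> real) \<Rightarrow> params" where
  "rowset W \<nu> r v = W(\<nu> := (W \<nu>)(r := v))"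

definition colset :: "params \<Rightarrow> nat set \<Rightarrow> nat \<Rightarrow> (nat \<Rightarrow> real) \<Rightarrow> params" where
  "colset W \<gamma> r u = W(\<gamma> := (\<lambda>i. (W \<gamma> i)(r := u i)))"

definition Bn :: "(nat set \<Rightarrow> nat) \<Rightarrow> params \<Rightarrow> mtree list \<Rightarrow> nat \<Rightarrow> nat \<Rightarrow> (nat \<Rightarrow> nat) \<Rightarrow> real" where
  "Bn R W cs r k idx = (\<Sum>r'\<in>{..<R (lbl (Node cs))} - {r}. W (lbl (Node cs)) r' k * (\<Prod>c\<in>set cs. ten R W c r' idx))"

lemma row_node:
  assumes g: "good (Node cs)" and r: "r < R (lbl (Node cs))"
  shows "ten R (rowset W (lbl (Node cs)) r v) (Node cs) k idx
         = Bn R W cs r k idx + v k * (\<Prod>c\<in>set cs. ten R W c r idx)"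
proof -
  let ?\<nu> = "lbl (Node cs)"
  let ?W' = "rowset W ?\<nu> r v"
  have ch: "ten R ?W' c r' idx = ten R W c r' idx" if c: "c \<in> set cs" for c r'
  proof (rule ten_local, intro ballI)
    fix S' assume "S' \<in> subtrees c"
    then have "lbl S' \<noteq> ?\<nu>" using lbl_sub_not[OF g c] by blast
    then show "?W' (lbl S') = W (lbl S')" unfolding rowset_def by simp
  qed
  have pl: "prod_list (map (\<lambda>c. ten R ?W' c r' idx) cs) = (\<Prod>c\<in>set cs. ten R W c r' idx)" for r'
  proof -
    have "prod_list (map (\<lambda>c. ten R ?W' c r' idx) cs) = (\<Prod>c\<in>set cs. ten R ?W' c r' idx)"
      by (rule prod.distinct_set_conv_list[OF good_children(1)[OF g], symmetric])
    also have "\<dots> = (\<Prod>c\<in>set cs. ten R W c r' idx)" using ch by simp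
    finally show ?thesis .
  qed
  have "ten R ?W' (Node cs) k idx = (\<Sum>r'<R ?\<nu>. ?W' ?\<nu> r' k * (\<Prod>c\<in>set cs. ten R W c r' idx))"
    by (subst ten.simps(2)) (simp only: pl)
  also have "\<dots> = ?W' ?\<nu> r k * (\<Prod>c\<in>set cs. ten R W c r idx)
       + (\<Sum>r'\<in>{..<R ?\<nu>} - {r}. ?W' ?\<nu> r' k * (\<Prod>c\<in>set cs. ten R W c r' idx))"
    using sum.remove[of "{..<R ?\<nu>}" r] r by simp
  also have "(\<Sum>r'\<in>{..<R ?\<nu>} - {r}. ?W' ?\<nu> r' k * (\<Prod>c\<in>set cs. ten R W c r' idx)) = Bn R W cs r k idx"
    unfolding Bn_def rowset_def by (rule sum.cong) auto
  also have "?W' ?\<nu> r k = v k" unfolding rowset_def by simp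
  finally show ?thesis by (simp only: add.commute)
qed

lemma col_child:
  assumes g: "good c0" and ix: "\<forall>n\<in>lbl c0. idx n < D n"
  shows "\<exists>p. \<forall>u r'. ten R (colset W (lbl c0) r u) c0 r' idx
     = (if r' = r then (\<Sum>i<rk R D (lbl c0). u i * p i) else ten R W c0 r' idx)"
proof (cases c0)
  case (Leaf n)
  have lt: "idx n < D n" using ix Leaf by simp
  show ?thesis
  proof (intro exI[of _ "\<lambda>i. if i = idx n then 1 else 0"] allI)
    fix u :: "nat \<Rightarrow> real" and r' :: nat
    have "(\<Sum>i<D n. u i * (if i = idx n then 1 else 0)) = (\<Sum>i<D n. if i = idx n then u i else 0)"
      by (intro sum.cong) auto
    also have "\<dots> = u (idx n)" using lt by (simp add: sum.delta)
    finally have "(\<Sum>i<D n. u i * (if i = idx n then 1 else 0)) = u (idx n)" .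
    then show "ten R (colset W (lbl c0) r u) c0 r' idx =
       (if r' = r then \<Sum>i<rk R D (lbl c0). u i * (if i = idx n then 1 else 0) else ten R W c0 r' idx)"
      using Leaf by (simp add: colset_def rk_leaf)
  qed
next
  case (Node cs0)
  let ?\<gamma> = "lbl (Node cs0)"
  let ?p = "\<lambda>i. prod_list (map (\<lambda>c. ten R W c i idx) cs0)"
  have g': "good (Node cs0)" using g Node by simp
  show ?thesis
  proof (intro exI[of _ ?p] allI)
    fix u :: "nat \<Rightarrow> real" and r' :: nat
    let ?W' = "colset W ?\<gamma> r u"
    have ch: "ten R ?W' c i idx = ten R W c i idx" if c: "c \<in> set cs0" for c i
    proof (rule ten_local, intro ballI)
      fix S' assume "S' \<in> subtrees c"
      then have "lbl S' \<noteq> ?\<gamma>" using lbl_sub_not[OF g' c] by blast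
      then show "?W' (lbl S') = W (lbl S')" unfolding colset_def by simp
    qed
    have pl: "prod_list (map (\<lambda>c. ten R ?W' c i idx) cs0) = ?p i" for i
      using ch by (simp cong: map_cong)
    have "ten R ?W' (Node cs0) r' idx = (\<Sum>i<R ?\<gamma>. ?W' ?\<gamma> i r' * ?p i)"
      by (subst ten.simps(2)) (simp only: pl)
    also have "\<dots> = (if r' = r then (\<Sum>i<rk R D ?\<gamma>. u i * ?p i) else ten R W (Node cs0) r' idx)"
      by (simp del: lbl.simps add: colset_def rk_node[OF g'])
    finally show "ten R (colset W (lbl c0) r u) c0 r' idx
     = (if r' = r then (\<Sum>i<rk R D (lbl c0). u i * ?p i) else ten R W c0 r' idx)"
      using Node by simp
  qed
qed

lemma col_node:
  assumes g: "good (Node cs)" and r: "r < R (lbl (Node cs))" and c0: "c0 \<in> set cs"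
    and ix: "\<forall>n\<in>lbl c0. idx n < D n"
  shows "\<exists>p Q. \<forall>u k. ten R (colset W (lbl c0) r u) (Node cs) k idx
         = Bn R W cs r k idx + W (lbl (Node cs)) r k * (\<Sum>i<rk R D (lbl c0). u i * p i) * Q"
proof -
  let ?\<nu> = "lbl (Node cs)"
  obtain p where p: "\<And>u r'. ten R (colset W (lbl c0) r u) c0 r' idx
     = (if r' = r then (\<Sum>i<rk R D (lbl c0). u i * p i) else ten R W c0 r' idx)"
    using col_child[OF good_sub[OF g child_sub[OF c0]] ix] by blast
  define Pc where "Pc = (\<lambda>r'. \<Prod>c\<in>set cs - {c0}. ten R W c r' idx)"
  show ?thesis
  proof (intro exI[of _ p] exI[of _ "Pc r"] allI)
    fix u :: "nat \<Rightarrow> real" and k :: nat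
    let ?W' = "colset W (lbl c0) r u"
    have ag: "\<forall>S'\<in>subtrees (Node cs). lbl S' \<notin> lbl ` subtrees c0 \<longrightarrow> ?W' (lbl S') = W (lbl S')"
    proof -
      have "lbl c0 \<in> lbl ` subtrees c0" using sub_refl by blast
      then show ?thesis by (auto simp: colset_def)
    qed
    have full: "(\<Prod>c\<in>set cs. ten R W c r' idx) = ten R W c0 r' idx * Pc r'" for r'
      unfolding Pc_def using prod.remove[OF _ c0] by simp
    have "ten R ?W' (Node cs) k idx = (\<Sum>r'<R ?\<nu>. W ?\<nu> r' k * ten R ?W' c0 r' idx * Pc r')"
      unfolding node_split[OF g c0 ag] Pc_def ..
    also have "\<dots> = W ?\<nu> r k * ten R ?W' c0 r idx * Pc r
       + (\<Sum>r'\<in>{..<R ?\<nu>} - {r}. W ?\<nu> r' k * ten R ?W' c0 r' idx * Pc r')"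
      using sum.remove[of "{..<R ?\<nu>}" r] r by simp
    also have "(\<Sum>r'\<in>{..<R ?\<nu>} - {r}. W ?\<nu> r' k * ten R ?W' c0 r' idx * Pc r') = Bn R W cs r k idx"
      unfolding Bn_def by (rule sum.cong) (auto simp: p full)
    finally show "ten R ?W' (Node cs) k idx
         = Bn R W cs r k idx + W ?\<nu> r k * (\<Sum>i<rk R D (lbl c0). u i * p i) * Pc r"
      by (simp add: p)
  qed
qed


lemma path_top:
  assumes g: "good T" and S: "Node cs \<in> subtrees T"
  shows "\<exists>coef. \<forall>W'. (\<forall>\<mu>. \<mu> \<notin> lbl ` subtrees (Node cs) \<longrightarrow> W' \<mu> = W \<mu>) \<longrightarrow>
     ten R W' T 0 idx = (\<Sum>k<prk T R D (lbl (Node cs)). coef k * ten R W' (Node cs) k idx)"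
proof (cases "Node cs = T")
  case True
  then have "prk T R D (lbl (Node cs)) = 1" unfolding prk_def by simp
  then show ?thesis using True by (intro exI[of _ "\<lambda>_. 1"]) simp
next
  case False
  then obtain cs' where cs': "Node cs' \<in> subtrees T" "Node cs \<in> set cs'"
    using parent_exists[OF S] by blast
  show ?thesis
    using path[OF g cs', of W R 0 idx] prk_child[OF g cs', of R D] by simp
qed

lemma row_lin:
  assumes g: "good T" and S: "Node cs \<in> subtrees T" and r: "r < R (lbl (Node cs))"
  shows "\<exists>q. \<forall>v. ten R (rowset W (lbl (Node cs)) r v) T 0 idx
     = ten R (rowset W (lbl (Node cs)) r (\<lambda>_. 0)) T 0 idx + (\<Sum>k<prk T R D (lbl (Node cs)). v k * q k)"
proof -
  let ?\<nu> = "lbl (Node cs)"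
  let ?K = "prk T R D ?\<nu>"
  obtain coef where coef: "\<And>W'. (\<forall>\<mu>. \<mu> \<notin> lbl ` subtrees (Node cs) \<longrightarrow> W' \<mu> = W \<mu>) \<Longrightarrow>
     ten R W' T 0 idx = (\<Sum>k<?K. coef k * ten R W' (Node cs) k idx)"
    using path_top[OF g S, of W R idx D] by blast
  have gn: "good (Node cs)" using good_sub[OF g S] .
  let ?P = "\<Prod>c\<in>set cs. ten R W c r idx"
  have e: "ten R (rowset W ?\<nu> r v) T 0 idx = (\<Sum>k<?K. coef k * (Bn R W cs r k idx + v k * ?P))" for v
  proof -
    have "\<forall>\<mu>. \<mu> \<notin> lbl ` subtrees (Node cs) \<longrightarrow> rowset W ?\<nu> r v \<mu> = W \<mu>"
      using sub_refl unfolding rowset_def by fastforce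
    then show ?thesis using coef row_node[where R=R, OF gn r] by simp
  qed
  show ?thesis
    by (intro exI[of _ "\<lambda>k. coef k * ?P"] allI)
       (simp only: e, simp add: sum.distrib algebra_simps)
qed

lemma col_lin:
  assumes g: "good T" and S: "Node cs \<in> subtrees T" and r: "r < R (lbl (Node cs))"
    and c0: "c0 \<in> set cs" and ix: "\<forall>n\<in>lbl c0. idx n < D n"
  shows "\<exists>p. \<forall>u. ten R (colset W (lbl c0) r u) T 0 idx
     = ten R (rowset W (lbl (Node cs)) r (\<lambda>_. 0)) T 0 idx + (\<Sum>i<rk R D (lbl c0). u i * p i)"
proof -
  let ?\<nu> = "lbl (Node cs)"
  let ?K = "prk T R D ?\<nu>"
  obtain coef where coef: "\<And>W'. (\<forall>\<mu>. \<mu> \<notin> lbl ` subtrees (Node cs) \<longrightarrow> W' \<mu> = W \<mu>) \<Longrightarrow>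
     ten R W' T 0 idx = (\<Sum>k<?K. coef k * ten R W' (Node cs) k idx)"
    using path_top[OF g S, of W R idx D] by blast
  have gn: "good (Node cs)" using good_sub[OF g S] .
  let ?P = "\<Prod>c\<in>set cs. ten R W c r idx"
  have e0: "ten R (rowset W ?\<nu> r (\<lambda>_. 0)) T 0 idx = (\<Sum>k<?K. coef k * Bn R W cs r k idx)"
  proof -
    have "\<forall>\<mu>. \<mu> \<notin> lbl ` subtrees (Node cs) \<longrightarrow> rowset W ?\<nu> r (\<lambda>_. 0) \<mu> = W \<mu>"
      using sub_refl unfolding rowset_def by fastforce
    then show ?thesis using coef row_node[where R=R, OF gn r] by simp
  qed
  obtain p Q where pQ: "\<And>u k. ten R (colset W (lbl c0) r u) (Node cs) k idx
         = Bn R W cs r k idx + W ?\<nu> r k * (\<Sum>i<rk R D (lbl c0). u i * p i) * Q"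
    using col_node[where R=R, OF gn r c0 ix] by blast
  have e: "ten R (colset W (lbl c0) r u) T 0 idx
      = (\<Sum>k<?K. coef k * (Bn R W cs r k idx + W ?\<nu> r k * (\<Sum>i<rk R D (lbl c0). u i * p i) * Q))" for u
  proof -
    have "lbl c0 \<in> lbl ` subtrees (Node cs)" using child_sub[OF c0] by blast
    then have "\<forall>\<mu>. \<mu> \<notin> lbl ` subtrees (Node cs) \<longrightarrow> colset W (lbl c0) r u \<mu> = W \<mu>"
      unfolding colset_def by auto
    then show ?thesis using coef pQ by simp
  qed
  define C where "C = (\<Sum>k<?K. coef k * W ?\<nu> r k * Q)"
  show ?thesis
  proof (intro exI[of _ "\<lambda>i. p i * C"] allI)
    fix u :: "nat \<Rightarrow> real"
    have "ten R (colset W (lbl c0) r u) T 0 idx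
       = (\<Sum>k<?K. coef k * Bn R W cs r k idx) + (\<Sum>i<rk R D (lbl c0). u i * p i) * C"
      unfolding e C_def by (simp add: sum.distrib sum_distrib_left algebra_simps)
    also have "(\<Sum>i<rk R D (lbl c0). u i * p i) * C = (\<Sum>i<rk R D (lbl c0). u i * (p i * C))"
      by (simp only: sum_distrib_right mult.assoc)
    finally show "ten R (colset W (lbl c0) r u) T 0 idx
     = ten R (rowset W ?\<nu> r (\<lambda>_. 0)) T 0 idx + (\<Sum>i<rk R D (lbl c0). u i * (p i * C))"
      using e0 by simp
  qed
qed

definition ip :: "nat \<Rightarrow> (nat \<Rightarrow> nat) \<Rightarrow> tensor \<Rightarrow> tensor \<Rightarrow> real" where
  "ip N D X Y = (\<Sum>idx\<in>idxset N D. X idx * Y idx)"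

lemma tnorm_scale: "tnorm N D (\<lambda>idx. h * H idx) = \<bar>h\<bar> * tnorm N D H"
proof -
  have "(\<Sum>idx\<in>idxset N D. (h * H idx)\<^sup>2) = h\<^sup>2 * (\<Sum>idx\<in>idxset N D. (H idx)\<^sup>2)"
    by (simp add: power_mult_distrib sum_distrib_left)
  then show ?thesis unfolding tnorm_def by (simp add: real_sqrt_mult)
qed

lemma tnorm_nonneg: "tnorm N D H \<ge> 0"
  unfolding tnorm_def by (simp add: sum_nonneg)

lemma DL:
  assumes grad: "is_gradient N D L G" and X0: "X0 \<in> tspace N D" and H: "H \<in> tspace N D"
  shows "((\<lambda>x. L (\<lambda>idx. X0 idx + (x - x0) * H idx)) has_real_derivative ip N D (G X0) H) (at x0)"
  unfolding has_field_derivative_iff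
proof (rule LIM_I)
  fix e :: real assume e: "0 < e"
  define M where "M = tnorm N D H + 1"
  have M: "M > 0" "tnorm N D H < M" unfolding M_def using tnorm_nonneg[of N D H] by auto
  have "e / M > 0" using e M by simp
  then obtain \<delta> where d: "\<delta> > 0" and dd: "\<And>H'. H' \<in> tspace N D \<Longrightarrow> tnorm N D H' < \<delta> \<Longrightarrow>
        \<bar>L (\<lambda>idx. X0 idx + H' idx) - L X0 - (\<Sum>idx\<in>idxset N D. G X0 idx * H' idx)\<bar> \<le> e / M * tnorm N D H'"
    using grad X0 unfolding is_gradient_def by meson
  show "\<exists>s>0. \<forall>x. x \<noteq> x0 \<and> norm (x - x0) < s \<longrightarrow>
     norm ((L (\<lambda>idx. X0 idx + (x - x0) * H idx) - L (\<lambda>idx. X0 idx + (x0 - x0) * H idx)) / (x - x0) - ip N D (G X0) H) < e"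
  proof (intro exI[of _ "\<delta> / M"] conjI allI impI)
    show "\<delta> / M > 0" using d M by simp
    fix x assume x: "x \<noteq> x0 \<and> norm (x - x0) < \<delta> / M"
    define h where "h = x - x0"
    have h0: "h \<noteq> 0" using x h_def by simp
    have hs: "\<bar>h\<bar> * M < \<delta>" using x M unfolding h_def by (simp add: pos_less_divide_eq)
    define H' where "H' = (\<lambda>idx. h * H idx)"
    have H'sp: "H' \<in> tspace N D" using H unfolding tspace_def H'_def by simp
    have nH': "tnorm N D H' = \<bar>h\<bar> * tnorm N D H" unfolding H'_def by (rule tnorm_scale)
    have "tnorm N D H' \<le> \<bar>h\<bar> * M" unfolding nH' using M by (simp add: mult_left_mono)
    then have "tnorm N D H' < \<delta>" using hs by simp
    note b0 = dd[OF H'sp this]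
    have sumeq: "(\<Sum>idx\<in>idxset N D. G X0 idx * H' idx) = h * ip N D (G X0) H"
      unfolding ip_def H'_def by (simp add: sum_distrib_left algebra_simps)
    have b: "\<bar>L (\<lambda>idx. X0 idx + H' idx) - L X0 - h * ip N D (G X0) H\<bar> \<le> e / M * (\<bar>h\<bar> * tnorm N D H)"
      using b0 by (simp only: nH' sumeq)
    have x0e: "(\<lambda>idx. X0 idx + (x0 - x0) * H idx) = X0" by simp
    have nrm: "norm ((L (\<lambda>idx. X0 idx + (x - x0) * H idx) - L (\<lambda>idx. X0 idx + (x0 - x0) * H idx)) / (x - x0) - ip N D (G X0) H)
       = \<bar>(L (\<lambda>idx. X0 idx + H' idx) - L X0) / h - ip N D (G X0) H\<bar>"
      unfolding x0e H'_def h_def by simp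
    have "(L (\<lambda>idx. X0 idx + H' idx) - L X0) / h - ip N D (G X0) H
        = (L (\<lambda>idx. X0 idx + H' idx) - L X0 - h * ip N D (G X0) H) / h"
      using h0 by (simp add: field_simps)
    then have "\<bar>(L (\<lambda>idx. X0 idx + H' idx) - L X0) / h - ip N D (G X0) H\<bar>
        = \<bar>L (\<lambda>idx. X0 idx + H' idx) - L X0 - h * ip N D (G X0) H\<bar> / \<bar>h\<bar>"
      by simp
    also have "\<dots> \<le> e / M * (\<bar>h\<bar> * tnorm N D H) / \<bar>h\<bar>"
      by (rule divide_right_mono[OF b]) simp
    also have "\<dots> = e / M * tnorm N D H" using h0 by simp
    also have "\<dots> < e / M * M" by (rule mult_strict_left_mono[OF M(2) \<open>e / M > 0\<close>])
    also have "\<dots> = e" using M by simp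
    finally show "norm ((L (\<lambda>idx. X0 idx + (x - x0) * H idx) - L (\<lambda>idx. X0 idx + (x0 - x0) * H idx)) / (x - x0) - ip N D (G X0) H) < e"
      unfolding nrm .
  qed
qed

lemma ip_sum: "ip N D X (\<lambda>idx. \<Sum>j<K. c j * q j idx) = (\<Sum>j<K. c j * ip N D X (q j))"
  unfolding ip_def by (simp add: sum_distrib_left sum.swap[of _ "idxset N D"] algebra_simps)

lemma slice_deriv:
  fixes K :: nat and V :: "real \<Rightarrow> nat \<Rightarrow> real"
  assumes grad: "is_gradient N D L G"
    and A: "A \<in> tspace N D" and q: "\<And>j. j < K \<Longrightarrow> q j \<in> tspace N D"
    and lin: "\<And>v. Xf v = (\<lambda>idx. A idx + (\<Sum>j<K. v j * q j idx))"
    and fl: "\<And>j. j < K \<Longrightarrow> \<exists>g. ((\<lambda>x. L (Xf ((V t)(j := x)))) has_real_derivative g) (at (V t j))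
               \<and> ((\<lambda>s. V s j) has_real_derivative -g) (at t within {0..})"
  shows "((\<lambda>s. \<Sum>j<K. (V s j)\<^sup>2) has_real_derivative
           (-2 * ip N D (G (Xf (V t))) (\<lambda>idx. Xf (V t) idx - A idx))) (at t within {0..})"
proof -
  let ?X0 = "Xf (V t)"
  have sp: "(\<lambda>idx. A idx + (\<Sum>j<K. v j * q j idx)) \<in> tspace N D" for v
    using A q unfolding tspace_def by simp
  have X0: "?X0 \<in> tspace N D" using sp lin by simp
  have dj: "((\<lambda>s. V s j) has_real_derivative - ip N D (G ?X0) (q j)) (at t within {0..})" if j: "j < K" for j
  proof -
    obtain g where g1: "((\<lambda>x. L (Xf ((V t)(j := x)))) has_real_derivative g) (at (V t j))"
      and g2: "((\<lambda>s. V s j) has_real_derivative -g) (at t within {0..})" using fl[OF j] by blast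
    have eq: "Xf ((V t)(j := x)) = (\<lambda>idx. ?X0 idx + (x - V t j) * q j idx)" for x
    proof
      fix idx
      let ?f = "\<lambda>j'. ((V t)(j := x)) j' * q j' idx"
      let ?g = "\<lambda>j'. V t j' * q j' idx"
      have jK: "j \<in> {..<K}" using j by simp
      have r1: "sum ?f {..<K} = ?f j + sum ?f ({..<K} - {j})" by (rule sum.remove[OF _ jK]) simp
      have r2: "sum ?g {..<K} = ?g j + sum ?g ({..<K} - {j})" by (rule sum.remove[OF _ jK]) simp
      have r3: "sum ?f ({..<K} - {j}) = sum ?g ({..<K} - {j})" by (rule sum.cong) auto
      have "(\<Sum>j'<K. ((V t)(j := x)) j' * q j' idx) = (\<Sum>j'<K. V t j' * q j' idx) + (x - V t j) * q j idx"
        unfolding r1 r2 r3 by (simp add: algebra_simps)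
      then show "Xf ((V t)(j := x)) idx = ?X0 idx + (x - V t j) * q j idx"
        unfolding lin by simp
    qed
    have "((\<lambda>x. L (Xf ((V t)(j := x)))) has_real_derivative ip N D (G ?X0) (q j)) (at (V t j))"
      unfolding eq by (rule DL[OF grad X0 q[OF j]])
    then have "g = ip N D (G ?X0) (q j)" using g1 DERIV_unique by blast
    then show ?thesis using g2 by simp
  qed
  have "((\<lambda>s. \<Sum>j<K. V s j * V s j) has_real_derivative
          (\<Sum>j<K. - ip N D (G ?X0) (q j) * V t j + - ip N D (G ?X0) (q j) * V t j)) (at t within {0..})"
    by (rule DERIV_sum, rule DERIV_mult) (use dj in auto)
  moreover have "(\<Sum>j<K. - ip N D (G ?X0) (q j) * V t j + - ip N D (G ?X0) (q j) * V t j)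
        = -2 * ip N D (G ?X0) (\<lambda>idx. ?X0 idx - A idx)"
  proof -
    have "(\<lambda>idx. ?X0 idx - A idx) = (\<lambda>idx. \<Sum>j<K. V t j * q j idx)" using lin by simp
    then show ?thesis by (simp add: ip_sum sum_distrib_left algebra_simps sum.distrib)
  qed
  ultimately show ?thesis by (simp add: power2_eq_square)
qed


lemma sum_list_upt: "sum_list (map g [0..<K]) = (\<Sum>j<K. g j)"
  by (induction K) auto

lemma vnorm_sq: "(vnorm (map f [0..<K]))\<^sup>2 = (\<Sum>j<K. (f j)\<^sup>2)"
proof -
  have "sum_list (map (\<lambda>x. x\<^sup>2) (map f [0..<K])) = (\<Sum>j<K. (f j)\<^sup>2)"
    by (simp add: sum_list_upt)
  moreover have "(\<Sum>j<K. (f j)\<^sup>2) \<ge> 0" by (simp add: sum_nonneg)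
  ultimately show ?thesis unfolding vnorm_def by simp
qed

lemma et_sp: "end_tensor N D T R W \<in> tspace N D"
  unfolding end_tensor_def tspace_def by simp

lemma rowset_triv: "rowset W \<nu> r (W \<nu> r) = W"
  unfolding rowset_def by simp

lemma colset_triv: "colset W \<gamma> r (\<lambda>i. W \<gamma> i r) = W"
  unfolding colset_def by (simp add: fun_eq_iff)

lemma colset_upd: "colset W \<gamma> r ((\<lambda>i'. W \<gamma> i' r)(i := x)) = upd W \<gamma> i r x"
  unfolding colset_def upd_def by (auto simp: fun_eq_iff)

lemma rowset_upd: "rowset W \<nu> r ((W \<nu> r)(j := x)) = upd W \<nu> r j x"
  unfolding rowset_def upd_def by simp

theorem lemma2:
  fixes N :: nat and D :: "nat \<Rightarrow> nat" and T :: mtree and R :: "nat set \<Rightarrow> nat"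
    and L :: "tensor \<Rightarrow> real" and W :: "real \<Rightarrow> params"
  assumes "mode_tree N T"
    and "\<forall>n\<in>{1..N}. D n \<ge> 1"
    and "\<forall>\<nu>\<in>interior T. R \<nu> \<ge> 1"
    and "differentiable_loss N D L"
    and "locally_smooth_loss N D L"
    and "gradient_flow N D T R L W"
  shows "\<forall>\<nu>\<in>interior T. \<forall>r<R \<nu>. \<forall>w\<in>LC T R D \<nu> r. \<forall>w'\<in>LC T R D \<nu> r. \<forall>t\<ge>0.
           (vnorm (w (W t)))\<^sup>2 - (vnorm (w' (W t)))\<^sup>2 = (vnorm (w (W 0)))\<^sup>2 - (vnorm (w' (W 0)))\<^sup>2"
proof (intro ballI allI impI)
  have g: "good T" using assms(1) unfolding mode_tree_def good_def by blast
  have lvs: "lbl T = {1..N}" using assms(1) unfolding mode_tree_def by (simp add: lbl_leaves)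
  obtain G where grad: "is_gradient N D L G" using assms(4) unfolding differentiable_loss_def by blast
  have gf: "\<And>t \<nu> i j. t \<ge> 0 \<Longrightarrow> \<nu> \<in> nodes T \<Longrightarrow> i < rk R D \<nu> \<Longrightarrow> j < prk T R D \<nu> \<Longrightarrow>
     \<exists>g. ((\<lambda>x. phiH N D T R L (upd (W t) \<nu> i j x)) has_real_derivative g) (at (W t \<nu> i j))
       \<and> ((\<lambda>s. W s \<nu> i j) has_real_derivative (- g)) (at t within {0..})"
    using assms(6) unfolding gradient_flow_def by blast
  fix \<nu> r w w' and t :: real
  assume \<nu>: "\<nu> \<in> interior T" and r: "r < R \<nu>" and w: "w \<in> LC T R D \<nu> r" and w': "w' \<in> LC T R D \<nu> r"
    and t: "0 \<le> t"
  obtain cs where S: "Node cs \<in> subtrees T" and \<nu>e: "\<nu> = lbl (Node cs)"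
    using \<nu> unfolding interior_def by blast
  have gn: "good (Node cs)" using good_sub[OF g S] .
  have rL: "r < R (lbl (Node cs))" using r \<nu>e by simp
  define E where "E t = end_tensor N D T R (W t)" for t
  define Z where "Z t = end_tensor N D T R (rowset (W t) \<nu> r (\<lambda>_. 0))" for t
  have Zsp: "Z t \<in> tspace N D" for t unfolding Z_def by (rule et_sp)
  define dv where "dv t = -2 * ip N D (G (E t)) (\<lambda>idx. E t idx - Z t idx)" for t
  have key: "((\<lambda>s. (vnorm (w (W s)))\<^sup>2) has_real_derivative dv t) (at t within {0..})"
    if w: "w \<in> LC T R D \<nu> r" and t: "t \<ge> 0" for w t
  proof -
    have "w = (\<lambda>W. map (\<lambda>j. W \<nu> r j) [0..<prk T R D \<nu>]) \<or>
          (\<exists>c. c \<in> children T \<nu> \<and> w = (\<lambda>W. map (\<lambda>i. W c i r) [0..<rk R D c]))"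
      using w unfolding LC_def by blast
    then show ?thesis
    proof
      assume wr: "w = (\<lambda>W. map (\<lambda>j. W \<nu> r j) [0..<prk T R D \<nu>])"
      let ?K = "prk T R D \<nu>"
      let ?Xf = "\<lambda>v. end_tensor N D T R (rowset (W t) \<nu> r v)"
      have ex: "\<forall>idx. \<exists>q. \<forall>v. ten R (rowset (W t) \<nu> r v) T 0 idx
         = ten R (rowset (W t) \<nu> r (\<lambda>_. 0)) T 0 idx + (\<Sum>k<?K. v k * q k)"
        using row_lin[where R=R, OF g S rL, of "W t", folded \<nu>e] by blast
      obtain qq where qq: "\<forall>idx v. ten R (rowset (W t) \<nu> r v) T 0 idx
         = ten R (rowset (W t) \<nu> r (\<lambda>_. 0)) T 0 idx + (\<Sum>k<?K. v k * qq idx k)"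
        using choice[OF ex] by blast
      define Q where "Q k idx = (if idx \<in> idxset N D then qq idx k else 0)" for k idx
      have Qsp: "Q k \<in> tspace N D" for k unfolding Q_def tspace_def by simp
      have lin: "?Xf v = (\<lambda>idx. Z t idx + (\<Sum>k<?K. v k * Q k idx))" for v
      proof
        fix idx
        show "?Xf v idx = Z t idx + (\<Sum>k<?K. v k * Q k idx)"
          unfolding Z_def Q_def end_tensor_def using qq[rule_format, where idx=idx and v=v] by simp
      qed
      have nd: "\<nu> \<in> nodes T" using S \<nu>e unfolding nodes_def by blast
      have rk: "r < rk R D \<nu>" using rk_node[OF gn] rL \<nu>e by simp
      have fl: "\<exists>g. ((\<lambda>x. L (?Xf ((W t \<nu> r)(j := x)))) has_real_derivative g) (at (W t \<nu> r j))
               \<and> ((\<lambda>s. W s \<nu> r j) has_real_derivative -g) (at t within {0..})" if j: "j < ?K" for j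
        using gf[OF t nd rk j] unfolding phiH_def rowset_upd .
      have "((\<lambda>s. \<Sum>j<?K. (W s \<nu> r j)\<^sup>2) has_real_derivative
           (-2 * ip N D (G (?Xf (W t \<nu> r))) (\<lambda>idx. ?Xf (W t \<nu> r) idx - Z t idx))) (at t within {0..})"
        by (rule slice_deriv[where V = "\<lambda>s. W s \<nu> r" and Xf = ?Xf and K = ?K and A = "Z t" and q = Q and t = t, OF grad Zsp Qsp lin fl])
      then show ?thesis unfolding wr vnorm_sq dv_def E_def rowset_triv .
    next
      assume "\<exists>c. c \<in> children T \<nu> \<and> w = (\<lambda>W. map (\<lambda>i. W c i r) [0..<rk R D c])"
      then obtain \<gamma> where \<gamma>: "\<gamma> \<in> children T \<nu>" and wc: "w = (\<lambda>W. map (\<lambda>i. W \<gamma> i r) [0..<rk R D \<gamma>])"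
        by blast
      obtain cs2 c0 where h: "Node cs2 \<in> subtrees T" "lbl (Node cs2) = \<nu>" "c0 \<in> set cs2" "\<gamma> = lbl c0"
        using \<gamma> unfolding children_def by blast
      have "Node cs2 = Node cs" using sub_inj[OF g h(1) S] h(2) \<nu>e by simp
      then have c0: "c0 \<in> set cs" using h(3) by simp
      have c0T: "c0 \<in> subtrees T" using sub_trans[OF child_sub[OF c0] S] .
      have ix: "\<forall>n\<in>lbl c0. idx n < D n" if "idx \<in> idxset N D" for idx
        using that sub_lbl[OF c0T] lvs unfolding idxset_def by blast
      let ?K = "rk R D \<gamma>"
      let ?Xf = "\<lambda>u. end_tensor N D T R (colset (W t) \<gamma> r u)"
      have ex: "\<forall>idx. \<exists>p. idx \<in> idxset N D \<longrightarrow> (\<forall>u. ten R (colset (W t) \<gamma> r u) T 0 idx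
         = ten R (rowset (W t) \<nu> r (\<lambda>_. 0)) T 0 idx + (\<Sum>i<?K. u i * p i))"
      proof
        fix idx
        show "\<exists>p. idx \<in> idxset N D \<longrightarrow> (\<forall>u. ten R (colset (W t) \<gamma> r u) T 0 idx
         = ten R (rowset (W t) \<nu> r (\<lambda>_. 0)) T 0 idx + (\<Sum>i<?K. u i * p i))"
        proof (cases "idx \<in> idxset N D")
          case True
          show ?thesis using col_lin[where R=R, OF g S rL c0 ix[OF True], of "W t", folded \<nu>e h(4)] True by blast
        qed simp
      qed
      obtain qq where qq: "\<forall>idx. idx \<in> idxset N D \<longrightarrow> (\<forall>u. ten R (colset (W t) \<gamma> r u) T 0 idx
         = ten R (rowset (W t) \<nu> r (\<lambda>_. 0)) T 0 idx + (\<Sum>i<?K. u i * qq idx i))"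
        using choice[OF ex] by blast
      define Q where "Q k idx = (if idx \<in> idxset N D then qq idx k else 0)" for k idx
      have Qsp: "Q k \<in> tspace N D" for k unfolding Q_def tspace_def by simp
      have lin: "?Xf u = (\<lambda>idx. Z t idx + (\<Sum>k<?K. u k * Q k idx))" for u
      proof
        fix idx
        show "?Xf u idx = Z t idx + (\<Sum>k<?K. u k * Q k idx)"
          unfolding Z_def Q_def end_tensor_def using qq[rule_format, where idx=idx and u=u] by simp
      qed
      have nd: "\<gamma> \<in> nodes T" using c0T h(4) unfolding nodes_def by blast
      have pr: "r < prk T R D \<gamma>" using prk_child[OF g S c0, of R D] rL h(4) by simp
      have fl: "\<exists>g. ((\<lambda>x. L (?Xf ((\<lambda>i. W t \<gamma> i r)(j := x)))) has_real_derivative g) (at (W t \<gamma> j r))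
               \<and> ((\<lambda>s. W s \<gamma> j r) has_real_derivative -g) (at t within {0..})" if j: "j < ?K" for j
        using gf[OF t nd j pr] unfolding phiH_def colset_upd .
      have "((\<lambda>s. \<Sum>j<?K. (W s \<gamma> j r)\<^sup>2) has_real_derivative
           (-2 * ip N D (G (?Xf (\<lambda>i. W t \<gamma> i r))) (\<lambda>idx. ?Xf (\<lambda>i. W t \<gamma> i r) idx - Z t idx))) (at t within {0..})"
        by (rule slice_deriv[where V = "\<lambda>s i. W s \<gamma> i r" and Xf = ?Xf and K = ?K and A = "Z t" and q = Q and t = t, OF grad Zsp Qsp lin fl])
      then show ?thesis unfolding wc vnorm_sq dv_def E_def colset_triv .
    qed
  qed
  have "\<exists>c. \<forall>x\<in>{0::real..}. (vnorm (w (W x)))\<^sup>2 - (vnorm (w' (W x)))\<^sup>2 = c"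
  proof (rule has_field_derivative_zero_constant)
    show "convex {0::real..}" by simp
    fix x :: real assume "x \<in> {0..}"
    then have "x \<ge> 0" by simp
    show "((\<lambda>s. (vnorm (w (W s)))\<^sup>2 - (vnorm (w' (W s)))\<^sup>2) has_real_derivative 0) (at x within {0..})"
      using DERIV_diff[OF key[OF w \<open>x \<ge> 0\<close>] key[OF w' \<open>x \<ge> 0\<close>]] by simp
  qed
  then obtain c where "\<forall>x\<in>{0::real..}. (vnorm (w (W x)))\<^sup>2 - (vnorm (w' (W x)))\<^sup>2 = c"
    by blast
  then show "(vnorm (w (W t)))\<^sup>2 - (vnorm (w' (W t)))\<^sup>2 = (vnorm (w (W 0)))\<^sup>2 - (vnorm (w' (W 0)))\<^sup>2"
    using t by simp
qed

end
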